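(* For a positive integer $g$, let $t_g$ denote the number of numerical semigroups $\Lambda$ of genus $g$ satisfying $f(\Lambda)<3m(\Lambda)$. Then for every positive integer $g$, \[ t_g \leq F_{g+1} + \sum_{k = 1}^{g-1} \sum_{A \in \mathcal A_k} F_{g - |(A + A)\cap[0, k]| + |A| - k - 1}. \]
   Context: A numerical semigroup is a subset $\Lambda\subseteq\mathbb{N}_0$ closed under addition, containing $0$, with finite complement in $\mathbb{N}_0$. Its genus is $|\mathbb{N}_0\setminus\Lambda|$, its multiplicity $m(\Lambda)$ is its smallest nonzero element and its Frobenius number $f(\Lambda)$ is the largest element of $\mathbb{N}_0\setminus\Lambda$. For integers $a\le b$, $[a,b]=\{a,\dots,b\}$; $A+A=\{a_1+a_2:a_1,a_2\in A\}$. For a positive integer $k$, $\mathcal A_k = \{A \subseteq [0, k-1] : 0 \in A \text{ and } k \notin A + A\}$. $F_n$ are the Fibonacci numbers, $F_1=F_2=1$, $F_{n+2}=F_{n+1}+F_n$, with the convention $F_n=0$ for all $n\le 0$. *)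

theory Defs
  imports Main "HOL-Number_Theory.Fib"
begin

definition numerical_semigroup :: "nat set \<Rightarrow> bool" where
  "numerical_semigroup L \<longleftrightarrow> 0 \<in> L \<and> (\<forall>a\<in>L. \<forall>b\<in>L. a + b \<in> L) \<and> finite (UNIV - L)"

definition genus :: "nat set \<Rightarrow> nat" where
  "genus L = card (UNIV - L)"

definition multiplicity :: "nat set \<Rightarrow> nat" where
  "multiplicity L = (LEAST x. x \<in> L \<and> x \<noteq> 0)"

definition frobenius :: "nat set \<Rightarrow> nat" where
  "frobenius L = Max (UNIV - L)"

definition sumset :: "nat set \<Rightarrow> nat set" where
  "sumset A = {a1 + a2 | a1 a2. a1 \<in> A \<and> a2 \<in> A}"

definition AA :: "nat \<Rightarrow> nat set set" where
  "AA k = {A. A \<subseteq> {0..k-1} \<and> 0 \<in> A \<and> k \<notin> sumset A}"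

definition F :: "int \<Rightarrow> nat" where
  "F n = (if n \<le> 0 then 0 else fib (nat n))"

definition t :: "nat \<Rightarrow> nat" where
  "t g = card {L. numerical_semigroup L \<and> genus L = g \<and> frobenius L < 3 * multiplicity L}"

end

theory Submission imports Defs begin

lemma F_eq: "F n = fib (nat n)"
  by (simp add: F_def)

lemma F_rec: "F a + F (a+1) \<le> F (a+2)"
proof (cases "a \<ge> 0")
  case True
  then have "nat (a+2) = Suc (Suc (nat a))" "nat (a+1) = Suc (nat a)" by auto
  then show ?thesis by (simp add: F_eq)
next
  case False
  then have "nat a = 0" "nat (a+1) = 0" by auto
  then show ?thesis by (simp add: F_eq)
qed

lemma F_mono: "a \<le> b \<Longrightarrow> F a \<le> F b"
  by (simp add: F_eq fib_mono nat_mono)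

definition Obj :: "nat set \<Rightarrow> nat \<Rightarrow> (nat \<times> nat set \<times> nat set) set" where
  "Obj Fr w = {(n,J,C). J \<subseteq> {..<n} \<and> C \<subseteq> Fr \<and> n + card J + card C = w}"

lemma Obj_finite: "finite Fr \<Longrightarrow> finite (Obj Fr w)"
proof -
  assume "finite Fr"
  have "Obj Fr w \<subseteq> {..w} \<times> Pow {..<w} \<times> Pow Fr" by (auto simp: Obj_def)
  moreover have "finite ({..w} \<times> Pow {..<w} \<times> Pow Fr)" using \<open>finite Fr\<close> by auto
  ultimately show ?thesis by (rule finite_subset)
qed

lemma Obj_step: "w \<ge> 1 \<Longrightarrow> Obj {} w \<subseteq> (\<lambda>(n,J,C). (Suc n, J, C)) ` Obj {} (w-1)
   \<union> (if w \<ge> 2 then (\<lambda>(n,J,C). (Suc n, insert n J, C)) ` Obj {} (w-2) else {})"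
proof
  fix p assume w: "w \<ge> 1" and "p \<in> Obj {} w"
  then obtain n J C where p: "p = (n,J,C)" and J: "J \<subseteq> {..<n}" and C: "C = {}"
     and eq: "n + card J = w" by (auto simp: Obj_def)
  have fJ: "finite J" using J finite_subset by blast
  have "n \<noteq> 0"
  proof
    assume "n = 0" then have "J = {}" using J by auto
    then show False using eq w \<open>n = 0\<close> by simp
  qed
  then obtain n' where n: "n = Suc n'" using not0_implies_Suc by blast
  show "p \<in> (\<lambda>(n,J,C). (Suc n, J, C)) ` Obj {} (w-1)
   \<union> (if w \<ge> 2 then (\<lambda>(n,J,C). (Suc n, insert n J, C)) ` Obj {} (w-2) else {})"
  proof (cases "n' \<in> J")
    case True
    have J': "J - {n'} \<subseteq> {..<n'}" using J n by auto
    have c: "card (J - {n'}) = card J - 1" using True fJ by simp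
    have "card J \<ge> 1" using True fJ by (metis card_0_eq empty_iff less_one not_le)
    then have w2: "w \<ge> 2" using eq n by auto
    have "(n', J - {n'}, C) \<in> Obj {} (w-2)" using J' c C eq n \<open>card J \<ge> 1\<close> by (auto simp: Obj_def)
    moreover have "p = (Suc n', insert n' (J - {n'}), C)" using p n True by auto
    ultimately show ?thesis using w2 by force
  next
    case False
    have J': "J \<subseteq> {..<n'}" using J n False by (auto simp: less_Suc_eq)
    have "(n', J, C) \<in> Obj {} (w-1)" using J' C eq n by (auto simp: Obj_def)
    then show ?thesis using p n by force
  qed
qed

lemma Obj_base: "card (Obj {} w) \<le> F (int w + 1)"
proof (induction w rule: less_induct)
  case (less w)
  consider "w = 0" | "w = 1" | "w \<ge> 2" by linarith
  then show ?case
  proof cases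
    case 1
    have "Obj {} 0 = {(0,{},{})}" by (auto simp: Obj_def)
    then show ?thesis using 1 by (simp add: F_eq)
  next
    case 2
    have "card (Obj {} w) \<le> card ((\<lambda>(n,J,C). (Suc n, J, C)) ` Obj {} 0)"
      using Obj_step[of w] 2 by (intro card_mono finite_imageI Obj_finite) auto
    also have "\<dots> \<le> card (Obj {} 0)" by (intro card_image_le Obj_finite) auto
    also have "\<dots> \<le> F 1" using less[of 0] 2 by simp
    finally show ?thesis using 2 by (simp add: F_eq)
  next
    case 3
    have "card (Obj {} w) \<le> card ((\<lambda>(n,J,C). (Suc n, J, C)) ` Obj {} (w-1)
        \<union> (\<lambda>(n,J,C). (Suc n, insert n J, C)) ` Obj {} (w-2))"
      using Obj_step[of w] 3 by (intro card_mono finite_UnI finite_imageI Obj_finite) auto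
    also have "\<dots> \<le> card ((\<lambda>(n,J,C). (Suc n, J, C)) ` Obj {} (w-1))
        + card ((\<lambda>(n,J,C). (Suc n, insert n J, C)) ` Obj {} (w-2))" by (rule card_Un_le)
    also have "\<dots> \<le> card (Obj {} (w-1)) + card (Obj {} (w-2))"
      by (intro add_mono card_image_le Obj_finite) auto
    also have "\<dots> \<le> F (int (w-1) + 1) + F (int (w-2) + 1)"
      using less[of "w-1"] less[of "w-2"] 3 by (intro add_mono) auto
    also have "\<dots> = F ((int w - 1) + 1) + F (int w - 1)" using 3 by (simp add: of_nat_diff)
    also have "\<dots> \<le> F (int w + 1)" using F_rec[of "int w - 1"] by (simp add: add.commute)
    finally show ?thesis .
  qed
qed

lemma Obj_ins:
  assumes "finite Fr" "x \<notin> Fr"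
  shows "Obj (insert x Fr) w \<subseteq> Obj Fr w \<union> (if w \<ge> 1 then (\<lambda>(n,J,C). (n,J,insert x C)) ` Obj Fr (w-1) else {})"
proof
  fix p assume "p \<in> Obj (insert x Fr) w"
  then obtain n J C where p: "p = (n,J,C)" and J: "J \<subseteq> {..<n}" and C: "C \<subseteq> insert x Fr"
     and eq: "n + card J + card C = w" by (auto simp: Obj_def)
  have fC: "finite C" using C assms finite_subset by blast
  show "p \<in> Obj Fr w \<union> (if w \<ge> 1 then (\<lambda>(n,J,C). (n,J,insert x C)) ` Obj Fr (w-1) else {})"
  proof (cases "x \<in> C")
    case True
    have c: "card (C - {x}) = card C - 1" using True fC by simp
    have "card C \<ge> 1" using True fC by (metis card_0_eq empty_iff less_one not_le)
    have "(n, J, C - {x}) \<in> Obj Fr (w-1)" using J C c eq \<open>card C \<ge> 1\<close> by (auto simp: Obj_def)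
    moreover have "p = (n, J, insert x (C - {x}))" using p True by auto
    ultimately show ?thesis using \<open>card C \<ge> 1\<close> eq by force
  next
    case False
    then show ?thesis using p J C eq by (auto simp: Obj_def)
  qed
qed

lemma Obj_bound: "finite Fr \<Longrightarrow> card (Obj Fr w) \<le> F (int w + int (card Fr) + 1)"
proof (induction Fr arbitrary: w rule: finite_induct)
  case empty
  then show ?case using Obj_base by simp
next
  case (insert x Fr)
  show ?case
  proof (cases "w \<ge> 1")
    case True
    have "card (Obj (insert x Fr) w) \<le> card (Obj Fr w \<union> (\<lambda>(n,J,C). (n,J,insert x C)) ` Obj Fr (w-1))"
      using Obj_ins[OF insert(1,2), of w] True
      by (intro card_mono finite_UnI finite_imageI Obj_finite insert(1)) auto
    also have "\<dots> \<le> card (Obj Fr w) + card ((\<lambda>(n,J,C). (n,J,insert x C)) ` Obj Fr (w-1))"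
      by (rule card_Un_le)
    also have "\<dots> \<le> card (Obj Fr w) + card (Obj Fr (w-1))"
      by (intro add_mono card_image_le Obj_finite insert(1)) auto
    also have "\<dots> \<le> F (int w + int (card Fr) + 1) + F (int (w-1) + int (card Fr) + 1)"
      using insert(3) by (intro add_mono) auto
    also have "\<dots> = F ((int w + int (card Fr)) + 1) + F (int w + int (card Fr))"
      using True by (simp add: of_nat_diff)
    also have "\<dots> \<le> F (int w + int (card (insert x Fr)) + 1)"
      using F_rec[of "int w + int (card Fr)"] insert(1,2) by (simp add: add.commute add.left_commute)
    finally show ?thesis .
  next
    case False
    have "card (Obj (insert x Fr) w) \<le> card (Obj Fr w)"
      using Obj_ins[OF insert(1,2), of w] False
      by (intro card_mono Obj_finite insert(1)) auto
    also have "\<dots> \<le> F (int w + int (card Fr) + 1)" using insert(3) by auto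
    also have "\<dots> \<le> F (int w + int (card (insert x Fr)) + 1)"
      using insert(1,2) by (intro F_mono) auto
    finally show ?thesis .
  qed
qed

lemma card_le_Obj:
  assumes "inj_on \<phi> X" "\<phi> ` X \<subseteq> Obj Fr w" "finite Fr"
  shows "finite X \<and> card X \<le> F (int w + int (card Fr) + 1)"
proof -
  have f: "finite (\<phi> ` X)" using assms Obj_finite finite_subset by blast
  have "finite X" using finite_imageD[OF f assms(1)] .
  moreover have "card X = card (\<phi> ` X)" using assms(1) card_image by fastforce
  moreover have "card (\<phi> ` X) \<le> card (Obj Fr w)" using assms by (intro card_mono Obj_finite) auto
  ultimately show ?thesis using Obj_bound[OF assms(3), of w] by linarith
qed


lemma mem_plus_image: "(x::nat) \<in> (+) c ` S \<longleftrightarrow> c \<le> x \<and> x - c \<in> S"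
  by (auto simp: image_iff intro!: bexI[of _ "x-c"])

lemma card_plus_image: "card ((+) (c::nat) ` S) = card S"
  by (simp add: card_image)

lemma card_Un_sep:
  assumes "finite A" "finite B" "\<And>x. x\<in>A \<Longrightarrow> x < (c::nat)" "\<And>x. x\<in>B \<Longrightarrow> c \<le> x"
  shows "card (A \<union> B) = card A + card B"
  using assms by (intro card_Un_disjoint) force+

lemma ns_props:
  assumes ns: "numerical_semigroup L" and ne: "UNIV - L \<noteq> {}"
  shows "0 \<in> L" "\<And>a b. a\<in>L \<Longrightarrow> b\<in>L \<Longrightarrow> a+b\<in>L" "finite (UNIV - L)"
    "frobenius L \<notin> L" "\<And>x. x > frobenius L \<Longrightarrow> x \<in> L"
    "multiplicity L \<in> L" "multiplicity L > 0"
    "\<And>x. 0 < x \<Longrightarrow> x < multiplicity L \<Longrightarrow> x \<notin> L"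
proof -
  show z: "0 \<in> L" and add: "\<And>a b. a\<in>L \<Longrightarrow> b\<in>L \<Longrightarrow> a+b\<in>L" and fin: "finite (UNIV - L)"
    using ns by (auto simp: numerical_semigroup_def)
  have "frobenius L \<in> UNIV - L" unfolding frobenius_def using fin ne by (rule Max_in)
  then show "frobenius L \<notin> L" by simp
  show big: "\<And>x. x > frobenius L \<Longrightarrow> x \<in> L"
  proof (rule ccontr)
    fix x assume "x > frobenius L" "x \<notin> L"
    then have "x \<le> frobenius L" unfolding frobenius_def using fin by (intro Max_ge) auto
    then show False using \<open>x > frobenius L\<close> by simp
  qed
  have ex: "frobenius L + 1 \<in> L \<and> frobenius L + 1 \<noteq> 0" using big by simp
  have "multiplicity L \<in> L \<and> multiplicity L \<noteq> 0"
    unfolding multiplicity_def by (rule LeastI[of "\<lambda>x. x \<in> L \<and> x \<noteq> 0", OF ex])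
  then show "multiplicity L \<in> L" "multiplicity L > 0" by auto
  show "\<And>x. 0 < x \<Longrightarrow> x < multiplicity L \<Longrightarrow> x \<notin> L"
    unfolding multiplicity_def using not_less_Least by fastforce
qed

lemma gaps0:
  assumes ns: "numerical_semigroup L" and ne: "UNIV - L \<noteq> {}"
    and m: "m = multiplicity L" and f: "frobenius L < 2 * m"
  shows "UNIV - L = {1..<m} \<union> (+) (m+1) ` {i. i < m - 1 \<and> m + 1 + i \<notin> L}"
proof (rule set_eqI)
  note P = ns_props[OF ns ne, folded m]
  fix x
  consider "x = 0" | "0 < x \<and> x < m" | "x = m" | "m < x \<and> x < 2*m" | "2*m \<le> x" by linarith
  then show "x \<in> UNIV - L \<longleftrightarrow> x \<in> {1..<m} \<union> (+) (m+1) ` {i. i < m - 1 \<and> m + 1 + i \<notin> L}"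
  proof cases
    case 1 then show ?thesis using P by (simp only: Un_iff Diff_iff mem_plus_image) auto
  next
    case 2 then show ?thesis using P by (simp only: Un_iff Diff_iff mem_plus_image) auto
  next
    case 3 then show ?thesis using P by (simp only: Un_iff Diff_iff mem_plus_image) auto
  next
    case 4
    then have "x - (m+1) < m - 1" "m + 1 + (x - (m+1)) = x" by auto
    then show ?thesis using 4 by (simp only: Un_iff Diff_iff mem_plus_image) auto
  next
    case 5
    then have "x \<in> L" using P f by auto
    then show ?thesis using 5 by (simp only: Un_iff Diff_iff mem_plus_image) auto
  qed
qed

lemma card_gaps0:
  "card ({1..<m} \<union> (+) (m+1) ` {i. i < m - 1 \<and> m + 1 + i \<notin> L}) = (m - 1) + card {i. i < m - 1 \<and> m + 1 + i \<notin> L}"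
  apply (subst card_Un_sep[where c=m])
      apply auto[4]
  apply (simp only: card_plus_image)
  apply simp
  done

lemma gapsK:
  assumes ns: "numerical_semigroup L" and ne: "UNIV - L \<noteq> {}"
    and m: "m = multiplicity L" and f: "frobenius L = 2 * m + k" and km: "k < m"
    and A: "A = {a. a < k \<and> m + a \<in> L}"
  shows "UNIV - L = {1..<m} \<union> (+) m ` ({..<k} - A) \<union> {m+k}
     \<union> (+) (m+k+1) ` {i. i < m-k-1 \<and> m+k+1+i \<notin> L}
     \<union> (+) (2*m) ` {b \<in> {..<k} - sumset A. 2*m+b \<notin> L} \<union> {2*m+k}"
    (is "_ = ?E")
proof (rule set_eqI)
  note P = ns_props[OF ns ne, folded m]
  have fL: "2*m+k \<notin> L" using P f by simp
  have mk: "m + k \<notin> L"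
  proof
    assume "m + k \<in> L" then have "m + (m+k) \<in> L" using P by blast
    moreover have "m + (m+k) = 2*m+k" by simp
    ultimately show False using fL by metis
  qed
  have sA: "2*m + b \<in> L" if bs: "b \<in> sumset A" for b
  proof -
    obtain a1 a2 where "b = a1 + a2" "a1 \<in> A" "a2 \<in> A" using bs unfolding sumset_def by blast
    then have "m + a1 \<in> L" "m + a2 \<in> L" using A by auto
    then have "(m + a1) + (m + a2) \<in> L" using P by blast
    moreover have "(m + a1) + (m + a2) = 2*m + b" using \<open>b = a1 + a2\<close> by simp
    ultimately show ?thesis by metis
  qed
  fix x
  consider "x = 0" | "0 < x \<and> x < m" | "m \<le> x \<and> x < m + k" | "x = m + k" | "m + k < x \<and> x < 2*m"
    | "2*m \<le> x \<and> x < 2*m+k" | "x = 2*m+k" | "2*m+k < x" by linarith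
  then show "x \<in> UNIV - L \<longleftrightarrow> x \<in> ?E"
  proof cases
    case 1 then show ?thesis using P by (simp only: Un_iff Diff_iff mem_plus_image) auto
  next
    case 2 then show ?thesis using P by (simp only: Un_iff Diff_iff mem_plus_image) auto
  next
    case 3
    then have "m + (x - m) = x" "x - m < k" by auto
    then show ?thesis using 3 A by (simp only: Un_iff Diff_iff mem_plus_image) auto
  next
    case 4 then show ?thesis using mk by (simp only: Un_iff Diff_iff mem_plus_image) auto
  next
    case 5
    then have "x - (m+k+1) < m-k-1" "m+k+1 + (x - (m+k+1)) = x" by auto
    then show ?thesis using 5 by (simp only: Un_iff Diff_iff mem_plus_image) auto
  next
    case 6
    then have e: "2*m + (x - 2*m) = x" "x - 2*m < k" by auto
    show ?thesis
    proof (cases "x - 2*m \<in> sumset A")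
      case True
      then have "x \<in> L" using sA[OF True] e by simp
      then show ?thesis using 6 True km by (simp only: Un_iff Diff_iff mem_plus_image) auto
    next
      case False
      then show ?thesis using 6 e km by (simp only: Un_iff Diff_iff mem_plus_image) auto
    qed
  next
    case 7 then show ?thesis using fL by (simp only: Un_iff Diff_iff mem_plus_image) auto
  next
    case 8
    then have "x \<in> L" using P f by auto
    then show ?thesis using 8 by (simp only: Un_iff Diff_iff mem_plus_image) auto
  qed
qed

lemma card_gapsK:
  assumes "A \<subseteq> {..<k}" "k < m"
  shows "card ({1..<m} \<union> (+) m ` ({..<k} - A) \<union> {m+k}
     \<union> (+) (m+k+1) ` {i. i < m-k-1 \<and> m+k+1+i \<notin> L}
     \<union> (+) (2*m) ` {b \<in> {..<k} - sumset A. 2*m+b \<notin> L} \<union> {2*m+k})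
   = (m - 1) + (k - card A) + 1 + card {i. i < m-k-1 \<and> m+k+1+i \<notin> L}
     + card {b \<in> {..<k} - sumset A. 2*m+b \<notin> L} + 1"
proof -
  have fA: "finite A" using assms(1) finite_subset by blast
  have cA: "card ({..<k} - A) = k - card A" using assms(1) fA by (simp add: card_Diff_subset)
  let ?J = "{i. i < m-k-1 \<and> m+k+1+i \<notin> L}"
  let ?C = "{b \<in> {..<k} - sumset A. 2*m+b \<notin> L}"
  have fJ: "finite ?J" by auto
  have fC: "finite ?C" by auto
  show ?thesis
    apply (subst card_Un_sep[where c="2*m+k"])
       apply (use fJ fC assms in \<open>auto\<close>)[4]
    apply (subst card_Un_sep[where c="2*m"])
       apply (use fJ fC assms in \<open>auto\<close>)[4]
    apply (subst card_Un_sep[where c="m+k+1"])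
       apply (use fJ fC assms in \<open>auto\<close>)[4]
    apply (subst card_Un_sep[where c="m+k"])
       apply (use fJ fC assms in \<open>auto\<close>)[4]
    apply (subst card_Un_sep[where c="m"])
       apply (use fJ fC assms in \<open>auto\<close>)[4]
    apply (simp only: card_plus_image)
    apply (simp add: cA)
    done
qed


lemma genus_ne: "genus L \<ge> 1 \<Longrightarrow> UNIV - L \<noteq> {}"
  unfolding genus_def by (metis card.empty not_one_le_zero)

definition E0 :: "nat \<Rightarrow> nat set \<Rightarrow> nat set" where
  "E0 m J = {1..<m} \<union> (+) (m + 1) ` J"

definition EK :: "nat \<Rightarrow> nat \<Rightarrow> nat set \<Rightarrow> nat set \<Rightarrow> nat set \<Rightarrow> nat set" where
  "EK m k A J C = {1..<m} \<union> (+) m ` ({..<k} - A) \<union> {m+k}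
     \<union> (+) (m+k+1) ` J \<union> (+) (2*m) ` C \<union> {2*m+k}"


lemma class0:
  assumes "g \<ge> 1"
  shows "finite {L. numerical_semigroup L \<and> genus L = g \<and> frobenius L < 2 * multiplicity L}
    \<and> card {L. numerical_semigroup L \<and> genus L = g \<and> frobenius L < 2 * multiplicity L} \<le> F (int g + 1)"
proof -
  let ?X = "{L. numerical_semigroup L \<and> genus L = g \<and> frobenius L < 2 * multiplicity L}"
  let ?J = "\<lambda>L. {i. i < multiplicity L - 1 \<and> multiplicity L + 1 + i \<notin> L}"
  let ?\<phi> = "\<lambda>L. (multiplicity L - 1, ?J L, {}::nat set)"
  have ne: "UNIV - L \<noteq> {}" if "L \<in> ?X" for L using that assms genus_ne[of L] by simp
  have G: "UNIV - L = E0 (multiplicity L) (?J L)" if "L \<in> ?X" for L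
  proof -
    have "numerical_semigroup L" "frobenius L < 2 * multiplicity L" using that by auto
    from gaps0[OF this(1) ne[OF that] refl this(2)] show ?thesis unfolding E0_def .
  qed
  have "?\<phi> ` ?X \<subseteq> Obj {} g"
  proof
    fix p assume "p \<in> ?\<phi> ` ?X"
    then obtain L where L: "L \<in> ?X" and p: "p = ?\<phi> L" by blast
    have "g = card (UNIV - L)" using L by (simp add: genus_def)
    also have "\<dots> = (multiplicity L - 1) + card (?J L)" unfolding G[OF L] E0_def by (rule card_gaps0)
    finally show "p \<in> Obj {} g" using p by (auto simp: Obj_def)
  qed
  moreover have "inj_on ?\<phi> ?X"
  proof (rule inj_onI)
    fix L1 L2 assume L1: "L1 \<in> ?X" and L2: "L2 \<in> ?X" and eq: "?\<phi> L1 = ?\<phi> L2"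
    have "multiplicity L1 > 0" "multiplicity L2 > 0"
      using ns_props(7)[OF _ ne[OF L1]] ns_props(7)[OF _ ne[OF L2]] L1 L2 by auto
    moreover have "multiplicity L1 - 1 = multiplicity L2 - 1" using eq by (elim Pair_inject) assumption
    ultimately have m: "multiplicity L1 = multiplicity L2" by linarith
    have J: "?J L1 = ?J L2" using eq by (elim Pair_inject) assumption
    have "UNIV - L1 = UNIV - L2" unfolding G[OF L1] G[OF L2] using m J by (simp only:)
    then show "L1 = L2" by blast
  qed
  ultimately show ?thesis using card_le_Obj[of ?\<phi> ?X "{}" g] by simp
qed

definition XK :: "nat \<Rightarrow> nat \<Rightarrow> nat set \<Rightarrow> nat set set" where
  "XK g k A = {L. numerical_semigroup L \<and> genus L = g \<and> frobenius L = 2 * multiplicity L + k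
     \<and> k < multiplicity L \<and> {a. a < k \<and> multiplicity L + a \<in> L} = A}"

lemma classK:
  assumes g: "g \<ge> 1" and k: "k \<ge> 1" and A: "A \<in> AA k"
  shows "finite (XK g k A) \<and> card (XK g k A) \<le>
    F (int g - int (card (sumset A \<inter> {0..k})) + int (card A) - int k - 1)"
proof (cases "XK g k A = {}")
  case True then show ?thesis by simp
next
  case False
  have Ak: "A \<subseteq> {..<k}" and kA: "k \<notin> sumset A" using A k by (auto simp: AA_def)
  have cAk: "card A \<le> k" using card_mono[OF _ Ak] by simp
  let ?X = "XK g k A"
  let ?Fr = "{..<k} - sumset A"
  let ?J = "\<lambda>L. {i. i < multiplicity L - k - 1 \<and> multiplicity L + k + 1 + i \<notin> L}"
  let ?C = "\<lambda>L. {b \<in> {..<k} - sumset A. 2 * multiplicity L + b \<notin> L}"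
  let ?\<phi> = "\<lambda>L. (multiplicity L - k - 1, ?J L, ?C L)"
  have ne: "UNIV - L \<noteq> {}" if "L \<in> ?X" for L using that g genus_ne by (auto simp: XK_def)
  have G: "UNIV - L = EK (multiplicity L) k A (?J L) (?C L)" if "L \<in> ?X" for L
  proof -
    have "numerical_semigroup L" "frobenius L = 2 * multiplicity L + k" "k < multiplicity L"
      "A = {a. a < k \<and> multiplicity L + a \<in> L}" using that by (auto simp: XK_def)
    from gapsK[OF this(1) ne[OF that] refl this(2,3,4)] show ?thesis unfolding EK_def .
  qed
  have W: "(multiplicity L - k - 1) + card (?J L) + card (?C L) + 2*k + 2 = g + card A" if L: "L \<in> ?X" for L
  proof -
    have km: "k < multiplicity L" using L by (auto simp: XK_def)
    have "g = card (UNIV - L)" using L by (simp add: genus_def XK_def)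
    also have "\<dots> = (multiplicity L - 1) + (k - card A) + 1 + card (?J L) + card (?C L) + 1"
      unfolding G[OF L] EK_def by (rule card_gapsK[OF Ak km])
    finally show ?thesis using km cAk by linarith
  qed
  define w where "w = g + card A - 2*k - 2"
  have "?\<phi> ` ?X \<subseteq> Obj ?Fr w"
  proof
    fix p assume "p \<in> ?\<phi> ` ?X"
    then obtain L where L: "L \<in> ?X" and p: "p = ?\<phi> L" by blast
    show "p \<in> Obj ?Fr w" using p W[OF L] by (auto simp: Obj_def w_def)
  qed
  moreover have "inj_on ?\<phi> ?X"
  proof (rule inj_onI)
    fix L1 L2 assume L1: "L1 \<in> ?X" and L2: "L2 \<in> ?X" and eq: "?\<phi> L1 = ?\<phi> L2"
    have "k < multiplicity L1" "k < multiplicity L2" using L1 L2 by (auto simp: XK_def)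
    moreover have "multiplicity L1 - k - 1 = multiplicity L2 - k - 1" using eq by (elim Pair_inject) assumption
    ultimately have m: "multiplicity L1 = multiplicity L2" by linarith
    have J1: "?J L1 = ?J L2" using eq by (elim Pair_inject) assumption
    have J2: "?C L1 = ?C L2" using eq by (elim Pair_inject) assumption
    note J = J1 J2
    have "UNIV - L1 = UNIV - L2" unfolding G[OF L1] G[OF L2] using m J by (simp only:)
    then show "L1 = L2" by blast
  qed
  ultimately have res: "finite ?X \<and> card ?X \<le> F (int w + int (card ?Fr) + 1)"
    using card_le_Obj[of ?\<phi> ?X ?Fr w] by simp
  obtain L0 where "L0 \<in> ?X" using False by blast
  from W[OF this] have gA: "g + card A \<ge> 2*k + 2" by linarith
  have SS: "sumset A \<inter> {0..k} = {..<k} \<inter> sumset A" using kA by (auto simp: order.order_iff_strict)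
  have Sk: "card ({..<k} \<inter> sumset A) \<le> k" using card_mono[of "{..<k}" "{..<k} \<inter> sumset A"] by auto
  have "card ?Fr = k - card ({..<k} \<inter> sumset A)" by (subst card_Diff_subset_Int) auto
  then have idx: "int w + int (card ?Fr) + 1 = int g - int (card (sumset A \<inter> {0..k})) + int (card A) - int k - 1"
    using gA Sk SS unfolding w_def by (simp add: of_nat_diff)
  show ?thesis using res idx by metis
qed

lemma finite_AA: "finite (AA k)"
proof -
  have "AA k \<subseteq> Pow {0..k-1}" by (auto simp: AA_def)
  then show ?thesis by (rule finite_subset) auto
qed

theorem lemma3p9:
  fixes g :: nat
  assumes "g \<ge> 1"
  shows "t g \<le> F (int g + 1) +
    (\<Sum>k = 1..g-1. \<Sum>A \<in> AA k.
       F (int g - int (card (sumset A \<inter> {0..k})) + int (card A) - int k - 1))"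
proof -
  let ?T = "{L. numerical_semigroup L \<and> genus L = g \<and> frobenius L < 3 * multiplicity L}"
  let ?X0 = "{L. numerical_semigroup L \<and> genus L = g \<and> frobenius L < 2 * multiplicity L}"
  let ?U = "\<Union>k\<in>{1..g-1}. \<Union>A\<in>AA k. XK g k A"
  have sub: "?T \<subseteq> ?X0 \<union> ?U"
  proof
    fix L assume L: "L \<in> ?T"
    show "L \<in> ?X0 \<union> ?U"
    proof (cases "frobenius L < 2 * multiplicity L")
      case True then show ?thesis using L by auto
    next
      case False
      define m where "m = multiplicity L"
      define f where "f = frobenius L"
      have ns: "numerical_semigroup L" and gL: "genus L = g" and f3: "f < 3*m"
        using L by (auto simp: m_def f_def)
      have ne: "UNIV - L \<noteq> {}" using gL assms genus_ne by auto
      note P = ns_props[OF ns ne, folded m_def f_def]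
      have "m + m \<in> L" using P(2)[OF P(6) P(6)] .
      then have "f \<noteq> 2*m" using P(4) by (metis mult_2)
      with False have f2: "f > 2*m" unfolding m_def f_def by linarith
      define k where "k = f - 2*m"
      have k1: "k \<ge> 1" and km: "k < m" and fk: "f = 2*m + k" using f2 f3 by (auto simp: k_def)
      define A where "A = {a. a < k \<and> m + a \<in> L}"
      have "A \<in> AA k"
      proof -
        have "A \<subseteq> {0..k-1}" by (auto simp: A_def)
        moreover have "0 \<in> A" using P(6) k1 by (simp add: A_def)
        moreover have "k \<notin> sumset A"
        proof
          assume "k \<in> sumset A"
          then obtain a1 a2 where "k = a1 + a2" "a1 \<in> A" "a2 \<in> A" unfolding sumset_def by blast
          then have "m + a1 \<in> L" "m + a2 \<in> L" by (auto simp: A_def)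
          then have "(m + a1) + (m + a2) \<in> L" using P(2) by blast
          moreover have "(m + a1) + (m + a2) = f" using fk \<open>k = a1 + a2\<close> by simp
          ultimately show False using P(4) by simp
        qed
        ultimately show ?thesis by (auto simp: AA_def)
      qed
      have "insert f {1..<m} \<subseteq> UNIV - L" using P(4) P(8) by auto
      then have "card (insert f {1..<m}) \<le> g" using card_mono[OF P(3)] gL by (auto simp: genus_def)
      moreover have "card (insert f {1..<m}) = m" using f2 P(7) by simp
      ultimately have "k \<le> g - 1" using km by linarith
      then have "k \<in> {1..g-1}" using k1 by simp
      moreover have "L \<in> XK g k A" using ns gL fk km unfolding XK_def A_def m_def f_def by auto
      ultimately show ?thesis using \<open>A \<in> AA k\<close> by blast
    qed
  qed
  have c0: "finite ?X0 \<and> card ?X0 \<le> F (int g + 1)" using class0[OF assms] .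
  have cK: "\<And>k A. k \<in> {1..g-1} \<Longrightarrow> A \<in> AA k \<Longrightarrow> finite (XK g k A) \<and> card (XK g k A) \<le>
    F (int g - int (card (sumset A \<inter> {0..k})) + int (card A) - int k - 1)"
    using classK[OF assms] by auto
  have fU: "finite ?U" using cK finite_AA by (intro finite_UN_I) auto
  have "t g = card ?T" by (simp add: t_def)
  also have "\<dots> \<le> card (?X0 \<union> ?U)" using sub c0 fU by (intro card_mono) auto
  also have "\<dots> \<le> card ?X0 + card ?U" by (rule card_Un_le)
  also have "card ?U \<le> (\<Sum>k = 1..g-1. card (\<Union>A\<in>AA k. XK g k A))" by (rule card_UN_le) simp
  also have "\<dots> \<le> (\<Sum>k = 1..g-1. \<Sum>A \<in> AA k. card (XK g k A))"
    by (intro sum_mono card_UN_le finite_AA)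
  also have "\<dots> \<le> (\<Sum>k = 1..g-1. \<Sum>A \<in> AA k.
       F (int g - int (card (sumset A \<inter> {0..k})) + int (card A) - int k - 1))"
    using cK by (intro sum_mono) auto
  finally show ?thesis using c0 by linarith
qed

end
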